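(* Let $R$ be a hyperring, $\mathcal{SR}(R)$ the set of strongly regular relations on $R$ ordered by inclusion, and $\mathcal I(\gamma^*(0))$ the set of hyperideals of $R$ containing $\gamma^*(0)$ ordered by inclusion. Then the map $f:\mathcal{SR}(R)\to\mathcal I(\gamma^*(0))$, $f(\rho)=\rho(0)$, is well defined and is an isomorphism of complete lattices, with inverse $g(I)=\rho_I=\{(x,y)\in R^2: x+I=y+I\}$ (in particular $\rho_I$ is strongly regular for each $I\in\mathcal I(\gamma^*(0))$, $\rho_I(0)=I$, and $\rho_{\rho(0)}=\rho$).
   Context: Standing conventions. A hyperring means a commutative Krasner hyperring with identity: a set $R$ with a hyperoperation $+:R\times R\to\mathcal P^*(R)$ (nonempty subsets; for subsets $A,B$ one sets $A+B=\bigcup_{a\in A,b\in B}a+b$) and a binary operation $\cdot$ such that: $+$ is associative and commutative; there is $0\in R$ with $0+x=\{x\}$ for all $x$; every $x$ has a unique $-x$ with $0\in x+(-x)$; $z\in x+y$ implies $y\in -x+z$ and $x\in z-y$; $(R,\cdot)$ is a commutative monoid with identity $1$; $0\cdot x=0$; and $x(y+z)=xy+xz$. A hyperideal of $R$ is a nonempty $I\subseteq R$ with $a-b\subseteq I$ and $ra\in I$ for all $a,b\in I$, $r\in R$; $x+I=\bigcup_{y\in I}(x+y)$. An equivalence relation $\rho$ on $R$ is strongly regular if whenever $(a,b)\in\rho$ and $(c,d)\in\rho$, then $(u,v)\in\rho$ for all $u\in a+c$, $v\in b+d$, and $(ac,bd)\in\rho$; $\rho(x)$ denotes the $\rho$-class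 of $x$. Let $\mathcal U$ be the set of all finite sums of finite products of elements of $R$ (each such sum is a subset of $R$). The relation $\gamma^*$ is defined by $(a,b)\in\gamma^*$ iff there exist $a=z_1,z_2,\dots,z_{n+1}=b$ in $R$ and $U_1,\dots,U_n\in\mathcal U$ with $\{z_i,z_{i+1}\}\subseteq U_i$ for all $i$; it is the smallest strongly regular relation on $R$, and $\gamma^*(0)$ is the $\gamma^*$-class of $0$. *)

theory Defs
  imports Main
begin

definition setadd :: "('a \<Rightarrow> 'a \<Rightarrow> 'a set) \<Rightarrow> 'a set \<Rightarrow> 'a set \<Rightarrow> 'a set" where
  "setadd add A B = (\<Union>a\<in>A. \<Union>b\<in>B. add a b)"

definition hneg :: "'a set \<Rightarrow> ('a \<Rightarrow> 'a \<Rightarrow> 'a set) \<Rightarrow> 'a \<Rightarrow> 'a \<Rightarrow> 'a" where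
  "hneg R add zero x = (THE y. y \<in> R \<and> zero \<in> add x y)"

definition hyperring ::
  "'a set \<Rightarrow> ('a \<Rightarrow> 'a \<Rightarrow> 'a set) \<Rightarrow> ('a \<Rightarrow> 'a \<Rightarrow> 'a) \<Rightarrow> 'a \<Rightarrow> 'a \<Rightarrow> bool" where
  "hyperring R add mul zero one \<longleftrightarrow>
     zero \<in> R \<and> one \<in> R \<and>
     (\<forall>x\<in>R. \<forall>y\<in>R. add x y \<noteq> {} \<and> add x y \<subseteq> R) \<and>
     (\<forall>x\<in>R. \<forall>y\<in>R. mul x y \<in> R) \<and>
     (\<forall>x\<in>R. \<forall>y\<in>R. \<forall>z\<in>R. setadd add (add x y) {z} = setadd add {x} (add y z)) \<and>
     (\<forall>x\<in>R. \<forall>y\<in>R. add x y = add y x) \<and>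
     (\<forall>x\<in>R. add zero x = {x}) \<and>
     (\<forall>x\<in>R. \<exists>!y. y \<in> R \<and> zero \<in> add x y) \<and>
     (\<forall>x\<in>R. \<forall>y\<in>R. \<forall>z\<in>R. z \<in> add x y \<longrightarrow>
          y \<in> add (hneg R add zero x) z \<and> x \<in> add z (hneg R add zero y)) \<and>
     (\<forall>x\<in>R. \<forall>y\<in>R. \<forall>z\<in>R. mul (mul x y) z = mul x (mul y z)) \<and>
     (\<forall>x\<in>R. \<forall>y\<in>R. mul x y = mul y x) \<and>
     (\<forall>x\<in>R. mul one x = x) \<and>
     (\<forall>x\<in>R. mul zero x = zero) \<and>
     (\<forall>x\<in>R. \<forall>y\<in>R. \<forall>z\<in>R. mul x ` (add y z) = setadd add {mul x y} {mul x z})"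

definition hyperideal ::
  "'a set \<Rightarrow> ('a \<Rightarrow> 'a \<Rightarrow> 'a set) \<Rightarrow> ('a \<Rightarrow> 'a \<Rightarrow> 'a) \<Rightarrow> 'a \<Rightarrow> 'a set \<Rightarrow> bool" where
  "hyperideal R add mul zero I \<longleftrightarrow>
     I \<noteq> {} \<and> I \<subseteq> R \<and>
     (\<forall>a\<in>I. \<forall>b\<in>I. add a (hneg R add zero b) \<subseteq> I) \<and>
     (\<forall>r\<in>R. \<forall>a\<in>I. mul r a \<in> I)"

definition strongly_regular ::
  "'a set \<Rightarrow> ('a \<Rightarrow> 'a \<Rightarrow> 'a set) \<Rightarrow> ('a \<Rightarrow> 'a \<Rightarrow> 'a) \<Rightarrow> ('a \<times> 'a) set \<Rightarrow> bool" where
  "strongly_regular R add mul \<rho> \<longleftrightarrow>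
     equiv R \<rho> \<and>
     (\<forall>a b c d. (a, b) \<in> \<rho> \<longrightarrow> (c, d) \<in> \<rho> \<longrightarrow>
        (\<forall>u\<in>add a c. \<forall>v\<in>add b d. (u, v) \<in> \<rho>) \<and> (mul a c, mul b d) \<in> \<rho>)"

inductive_set hprods :: "'a set \<Rightarrow> ('a \<Rightarrow> 'a \<Rightarrow> 'a) \<Rightarrow> 'a set"
  for R mul where
  base: "x \<in> R \<Longrightarrow> x \<in> hprods R mul"
| step: "p \<in> hprods R mul \<Longrightarrow> x \<in> R \<Longrightarrow> mul p x \<in> hprods R mul"

inductive_set hsums :: "'a set \<Rightarrow> ('a \<Rightarrow> 'a \<Rightarrow> 'a set) \<Rightarrow> ('a \<Rightarrow> 'a \<Rightarrow> 'a) \<Rightarrow> 'a set set"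
  for R add mul where
  base: "p \<in> hprods R mul \<Longrightarrow> {p} \<in> hsums R add mul"
| step: "A \<in> hsums R add mul \<Longrightarrow> p \<in> hprods R mul \<Longrightarrow> setadd add A {p} \<in> hsums R add mul"

definition gamma_star ::
  "'a set \<Rightarrow> ('a \<Rightarrow> 'a \<Rightarrow> 'a set) \<Rightarrow> ('a \<Rightarrow> 'a \<Rightarrow> 'a) \<Rightarrow> ('a \<times> 'a) set" where
  "gamma_star R add mul = {(x, y). \<exists>U\<in>hsums R add mul. x \<in> U \<and> y \<in> U}\<^sup>+"

definition rho_of ::
  "'a set \<Rightarrow> ('a \<Rightarrow> 'a \<Rightarrow> 'a set) \<Rightarrow> 'a set \<Rightarrow> ('a \<times> 'a) set" where
  "rho_of R add I = {(x, y). x \<in> R \<and> y \<in> R \<and> setadd add {x} I = setadd add {y} I}"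

definition complete_incl_lattice :: "'b set set \<Rightarrow> bool" where
  "complete_incl_lattice S \<longleftrightarrow>
     (\<forall>A\<subseteq>S. (\<exists>s\<in>S. (\<forall>a\<in>A. a \<subseteq> s) \<and> (\<forall>t\<in>S. (\<forall>a\<in>A. a \<subseteq> t) \<longrightarrow> s \<subseteq> t)) \<and>
              (\<exists>s\<in>S. (\<forall>a\<in>A. s \<subseteq> a) \<and> (\<forall>t\<in>S. (\<forall>a\<in>A. t \<subseteq> a) \<longrightarrow> t \<subseteq> s)))"

end

theory Submission
  imports Defs
begin

lemma setadd_sl: "setadd add {x} B = (\<Union>b\<in>B. add x b)" by (simp add: setadd_def)
lemma setadd_sr: "setadd add A {b} = (\<Union>a\<in>A. add a b)" by (simp add: setadd_def)
lemma setadd_ss: "setadd add {a} {b} = add a b" by (simp add: setadd_def)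

lemma cil_intro:
  assumes top: "T \<in> S" and le: "\<And>s. s \<in> S \<Longrightarrow> s \<subseteq> T"
    and int: "\<And>A. A \<subseteq> S \<Longrightarrow> A \<noteq> {} \<Longrightarrow> \<Inter>A \<in> S"
  shows "complete_incl_lattice S"
unfolding complete_incl_lattice_def
proof (intro allI impI conjI)
  fix A assume A: "A \<subseteq> S"
  define U where "U = {t\<in>S. \<forall>a\<in>A. a \<subseteq> t}"
  have "T \<in> U" unfolding U_def using top le A by auto
  hence "U \<noteq> {}" by auto
  moreover have "U \<subseteq> S" unfolding U_def by auto
  ultimately have IU: "\<Inter>U \<in> S" using int by simp
  have u1: "\<forall>a\<in>A. a \<subseteq> \<Inter>U" unfolding U_def by auto
  have u2: "\<forall>t\<in>S. (\<forall>a\<in>A. a \<subseteq> t) \<longrightarrow> \<Inter>U \<subseteq> t"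
  proof (intro ballI impI)
    fix t assume "t \<in> S" "\<forall>a\<in>A. a \<subseteq> t"
    hence "t \<in> U" unfolding U_def by simp
    thus "\<Inter>U \<subseteq> t" by (rule Inter_lower)
  qed
  show "\<exists>s\<in>S. (\<forall>a\<in>A. a \<subseteq> s) \<and> (\<forall>t\<in>S. (\<forall>a\<in>A. a \<subseteq> t) \<longrightarrow> s \<subseteq> t)"
    using IU u1 u2 by blast
  show "\<exists>s\<in>S. (\<forall>a\<in>A. s \<subseteq> a) \<and> (\<forall>t\<in>S. (\<forall>a\<in>A. t \<subseteq> a) \<longrightarrow> t \<subseteq> s)"
  proof (cases "A = {}")
    case True
    have "\<forall>t\<in>S. t \<subseteq> T" using le by auto
    then show ?thesis using True top by blast
  next
    case False
    have "\<Inter>A \<in> S" using int A False by simp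
    moreover have "\<forall>a\<in>A. \<Inter>A \<subseteq> a" by auto
    moreover have "\<forall>t\<in>S. (\<forall>a\<in>A. t \<subseteq> a) \<longrightarrow> t \<subseteq> \<Inter>A" by auto
    ultimately show ?thesis by blast
  qed
qed

context
  fixes R :: "'a set" and add :: "'a \<Rightarrow> 'a \<Rightarrow> 'a set" and mul :: "'a \<Rightarrow> 'a \<Rightarrow> 'a"
    and zero one :: 'a
  assumes hr: "hyperring R add mul zero one"
begin

abbreviation neg where "neg x \<equiv> hneg R add zero x"
lemmas H = hr[unfolded hyperring_def]
lemmas H1 = H[THEN conjunct1]
lemmas H2 = H[THEN conjunct2, THEN conjunct1]
lemmas H3 = H[THEN conjunct2, THEN conjunct2, THEN conjunct1]
lemmas H4 = H[THEN conjunct2, THEN conjunct2, THEN conjunct2, THEN conjunct1]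
lemmas H5 = H[THEN conjunct2, THEN conjunct2, THEN conjunct2, THEN conjunct2, THEN conjunct1]
lemmas H6 = H[THEN conjunct2, THEN conjunct2, THEN conjunct2, THEN conjunct2, THEN conjunct2, THEN conjunct1]
lemmas H7 = H[THEN conjunct2, THEN conjunct2, THEN conjunct2, THEN conjunct2, THEN conjunct2, THEN conjunct2, THEN conjunct1]
lemmas H8 = H[THEN conjunct2, THEN conjunct2, THEN conjunct2, THEN conjunct2, THEN conjunct2, THEN conjunct2, THEN conjunct2, THEN conjunct1]
lemmas H9 = H[THEN conjunct2, THEN conjunct2, THEN conjunct2, THEN conjunct2, THEN conjunct2, THEN conjunct2, THEN conjunct2, THEN conjunct2, THEN conjunct1]
lemmas H10 = H[THEN conjunct2, THEN conjunct2, THEN conjunct2, THEN conjunct2, THEN conjunct2, THEN conjunct2, THEN conjunct2, THEN conjunct2, THEN conjunct2, THEN conjunct1]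
lemmas H11 = H[THEN conjunct2, THEN conjunct2, THEN conjunct2, THEN conjunct2, THEN conjunct2, THEN conjunct2, THEN conjunct2, THEN conjunct2, THEN conjunct2, THEN conjunct2, THEN conjunct1]
lemmas H12 = H[THEN conjunct2, THEN conjunct2, THEN conjunct2, THEN conjunct2, THEN conjunct2, THEN conjunct2, THEN conjunct2, THEN conjunct2, THEN conjunct2, THEN conjunct2, THEN conjunct2, THEN conjunct1]
lemmas H13 = H[THEN conjunct2, THEN conjunct2, THEN conjunct2, THEN conjunct2, THEN conjunct2, THEN conjunct2, THEN conjunct2, THEN conjunct2, THEN conjunct2, THEN conjunct2, THEN conjunct2, THEN conjunct2, THEN conjunct1]
lemmas H14 = H[THEN conjunct2, THEN conjunct2, THEN conjunct2, THEN conjunct2, THEN conjunct2, THEN conjunct2, THEN conjunct2, THEN conjunct2, THEN conjunct2, THEN conjunct2, THEN conjunct2, THEN conjunct2, THEN conjunct2]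

lemma zero_in: "zero \<in> R" using H1 by blast
lemma add_sub: "x \<in> R \<Longrightarrow> y \<in> R \<Longrightarrow> add x y \<subseteq> R" using H3 by blast
lemma add_ne: "x \<in> R \<Longrightarrow> y \<in> R \<Longrightarrow> add x y \<noteq> {}" using H3 by blast
lemma mul_in: "x \<in> R \<Longrightarrow> y \<in> R \<Longrightarrow> mul x y \<in> R" using H4 by blast
lemma add_comm: "x \<in> R \<Longrightarrow> y \<in> R \<Longrightarrow> add x y = add y x" using H6 by blast
lemma add_zl: "x \<in> R \<Longrightarrow> add zero x = {x}" using H7 by blast
lemma add_zr: "x \<in> R \<Longrightarrow> add x zero = {x}" using add_comm add_zl zero_in by metis
lemma assoc: "x\<in>R \<Longrightarrow> y\<in>R \<Longrightarrow> z\<in>R \<Longrightarrow> setadd add (add x y) {z} = setadd add {x} (add y z)"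
  using H5 by blast
lemma neg_ex: "x \<in> R \<Longrightarrow> \<exists>!y. y \<in> R \<and> zero \<in> add x y" using H8 by blast
lemma neg_prop: "x \<in> R \<Longrightarrow> neg x \<in> R \<and> zero \<in> add x (neg x)"
  using theI'[OF neg_ex] unfolding hneg_def by blast
lemma neg_in: "x \<in> R \<Longrightarrow> neg x \<in> R" using neg_prop by blast
lemma neg_unique: "x \<in> R \<Longrightarrow> y \<in> R \<Longrightarrow> zero \<in> add x y \<Longrightarrow> neg x = y"
  using neg_ex neg_prop by blast
lemma neg_neg: "x\<in>R \<Longrightarrow> neg (neg x) = x"
  by (metis neg_unique neg_prop add_comm)
lemma rev1: "x\<in>R \<Longrightarrow> y\<in>R \<Longrightarrow> z\<in>R \<Longrightarrow> z \<in> add x y \<Longrightarrow> y \<in> add (neg x) z"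
  using H9 by blast
lemma rev2: "x\<in>R \<Longrightarrow> y\<in>R \<Longrightarrow> z\<in>R \<Longrightarrow> z \<in> add x y \<Longrightarrow> x \<in> add z (neg y)"
  using H9 by blast
lemma mul_comm: "x \<in> R \<Longrightarrow> y \<in> R \<Longrightarrow> mul x y = mul y x" using H11 by blast
lemma mul_zl: "x \<in> R \<Longrightarrow> mul zero x = zero" using H13 by blast
lemma mul_zr: "x \<in> R \<Longrightarrow> mul x zero = zero" using mul_comm mul_zl zero_in by metis
lemma distrib: "w\<in>R \<Longrightarrow> x\<in>R \<Longrightarrow> a\<in>R \<Longrightarrow> y \<in> add x a \<Longrightarrow> mul w y \<in> add (mul w x) (mul w a)"
proof -
  assume "w\<in>R" "x\<in>R" "a\<in>R" "y \<in> add x a"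
  moreover have "mul w ` (add x a) = setadd add {mul w x} {mul w a}"
    using H14 \<open>w\<in>R\<close> \<open>x\<in>R\<close> \<open>a\<in>R\<close> by blast
  ultimately show ?thesis by (auto simp: setadd_ss)
qed
lemma shift: "x\<in>R \<Longrightarrow> a\<in>R \<Longrightarrow> w\<in>R \<Longrightarrow> y \<in> add x a \<Longrightarrow> v \<in> add y w \<Longrightarrow> \<exists>u\<in>add x w. v \<in> add u a"
proof -
  assume h: "x\<in>R" "a\<in>R" "w\<in>R" "y \<in> add x a" "v \<in> add y w"
  have "v \<in> setadd add (add x a) {w}" using h by (auto simp: setadd_sr)
  also have "\<dots> = setadd add {x} (add a w)" using assoc h by blast
  also have "\<dots> = setadd add {x} (add w a)" using add_comm h by metis
  also have "\<dots> = setadd add (add x w) {a}" using assoc h by metis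
  finally show ?thesis by (auto simp: setadd_sr)
qed

context
  fixes I
  assumes hi: "hyperideal R add mul zero I"
begin

lemma hi_sub: "I \<subseteq> R" using hi unfolding hyperideal_def by blast
lemma hi_closed: "a \<in> I \<Longrightarrow> b \<in> I \<Longrightarrow> add a (neg b) \<subseteq> I" using hi unfolding hyperideal_def by blast
lemma hi_mul: "r \<in> R \<Longrightarrow> a \<in> I \<Longrightarrow> mul r a \<in> I" using hi unfolding hyperideal_def by blast
lemma hi_zero: "zero \<in> I"
proof -
  obtain a where a: "a \<in> I" using hi unfolding hyperideal_def by blast
  hence "a \<in> R" using hi_sub by blast
  thus ?thesis using hi_closed[OF a a] neg_prop by blast
qed
lemma hi_neg: "a \<in> I \<Longrightarrow> neg a \<in> I"
  using hi_closed[OF hi_zero, of a] add_zl neg_in hi_sub by blast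
lemma hi_add: "a \<in> I \<Longrightarrow> b \<in> I \<Longrightarrow> add a b \<subseteq> I"
proof -
  assume "a \<in> I" "b \<in> I"
  moreover have "neg (neg b) = b" using neg_neg hi_sub \<open>b \<in> I\<close> by blast
  ultimately show ?thesis using hi_closed[of a "neg b"] hi_neg by metis
qed

lemma coset_mem: "x \<in> R \<Longrightarrow> x \<in> setadd add {x} I"
  using hi_zero add_zr by (auto simp: setadd_sl)

lemma coset_sub: "u \<in> R \<Longrightarrow> b \<in> I \<Longrightarrow> v \<in> add u b \<Longrightarrow> setadd add {v} I \<subseteq> setadd add {u} I"
proof
  fix z assume h: "u \<in> R" "b \<in> I" "v \<in> add u b" and z: "z \<in> setadd add {v} I"
  have bR: "b \<in> R" using h hi_sub by blast
  have vR: "v \<in> R" using h add_sub bR by blast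
  obtain c where c: "c \<in> I" "z \<in> add v c" using z by (auto simp: setadd_sl)
  have cR: "c \<in> R" using c hi_sub by blast
  have "z \<in> setadd add (add u b) {c}" using h c by (auto simp: setadd_sr)
  also have "\<dots> = setadd add {u} (add b c)" using assoc h bR cR by blast
  finally obtain t where "t \<in> add b c" "z \<in> add u t" by (auto simp: setadd_sl)
  moreover have "add b c \<subseteq> I" using hi_add h c by blast
  ultimately show "z \<in> setadd add {u} I" by (auto simp: setadd_sl)
qed

lemma coset_eq: "u \<in> R \<Longrightarrow> b \<in> I \<Longrightarrow> v \<in> add u b \<Longrightarrow> setadd add {v} I = setadd add {u} I"
proof -
  assume h: "u \<in> R" "b \<in> I" "v \<in> add u b"
  have bR: "b \<in> R" using h hi_sub by blast
  have vR: "v \<in> R" using h add_sub bR by blast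
  have "u \<in> add v (neg b)" using rev2 h bR vR by blast
  thus ?thesis using coset_sub h vR hi_neg by blast
qed

lemma coset_iff: "x \<in> R \<Longrightarrow> y \<in> R \<Longrightarrow> (setadd add {x} I = setadd add {y} I) \<longleftrightarrow> y \<in> setadd add {x} I"
proof
  assume "x \<in> R" "y \<in> R" "setadd add {x} I = setadd add {y} I"
  thus "y \<in> setadd add {x} I" using coset_mem by blast
next
  assume "x \<in> R" "y \<in> R" "y \<in> setadd add {x} I"
  then obtain b where "b \<in> I" "y \<in> add x b" by (auto simp: setadd_sl)
  thus "setadd add {x} I = setadd add {y} I" using coset_eq \<open>x \<in> R\<close> by metis
qed

lemma coset_zero: "setadd add {zero} I = I"
  using hi_sub add_zl by (auto simp: setadd_sl)

lemma rho_of_iff: "(x, y) \<in> rho_of R add I \<longleftrightarrow> x \<in> R \<and> y \<in> R \<and> y \<in> setadd add {x} I"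
  unfolding rho_of_def using coset_iff by blast

lemma rho_of_zero: "rho_of R add I `` {zero} = I"
  using rho_of_iff zero_in coset_zero hi_sub by auto

lemma rho_of_equiv: "equiv R (rho_of R add I)"
  unfolding equiv_def refl_on_def sym_def trans_def rho_of_def by auto

lemma key:
  assumes g: "gamma_star R add mul `` {zero} \<subseteq> I"
    and a: "a \<in> R" and c: "c \<in> R" and u: "u \<in> add a c" and u': "u' \<in> add a c"
  shows "setadd add {u'} I = setadd add {u} I"
proof -
  have uR: "u \<in> R" and u'R: "u' \<in> R" using add_sub a c u u' by blast+
  obtain t where t: "t \<in> add u' (neg u)" using add_ne u'R neg_in uR by blast
  have tR: "t \<in> R" using t add_sub u'R neg_in uR by blast
  have "setadd add {a} {c} \<in> hsums R add mul"
    by (rule hsums.step[OF hsums.base[OF hprods.base[OF a]] hprods.base[OF c]])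
  hence "setadd add (add a c) {neg u} \<in> hsums R add mul"
    by (metis hsums.step hprods.base neg_in uR setadd_ss)
  moreover have "zero \<in> setadd add (add a c) {neg u}" using u neg_prop uR by (auto simp: setadd_sr)
  moreover have "t \<in> setadd add (add a c) {neg u}" using u' t by (auto simp: setadd_sr)
  ultimately have "(zero, t) \<in> gamma_star R add mul" unfolding gamma_star_def by blast
  hence tI: "t \<in> I" using g by blast
  have "u' \<in> add t (neg (neg u))" using rev2[OF u'R neg_in[OF uR] tR t] .
  hence "u' \<in> add u t" using neg_neg uR add_comm tR by metis
  thus ?thesis using coset_eq uR tI by blast
qed

lemma rho_of_sr:
  assumes g: "gamma_star R add mul `` {zero} \<subseteq> I"
  shows "strongly_regular R add mul (rho_of R add I)"
  unfolding strongly_regular_def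
proof (intro conjI rho_of_equiv allI impI ballI)
  fix a b c d u v
  assume ab: "(a, b) \<in> rho_of R add I" and cd: "(c, d) \<in> rho_of R add I"
  then have R: "a \<in> R" "b \<in> R" "c \<in> R" "d \<in> R" by (auto simp: rho_of_iff)
  obtain \<beta> where \<beta>: "\<beta> \<in> I" "b \<in> add a \<beta>" using ab by (auto simp: rho_of_iff setadd_sl)
  obtain \<delta> where \<delta>: "\<delta> \<in> I" "d \<in> add c \<delta>" using cd by (auto simp: rho_of_iff setadd_sl)
  have \<beta>R: "\<beta> \<in> R" and \<delta>R: "\<delta> \<in> R" using \<beta> \<delta> hi_sub by blast+
  {
    assume u: "u \<in> add a c" and v: "v \<in> add b d"
    obtain u1 where u1: "u1 \<in> add a d" "v \<in> add u1 \<beta>" using shift[OF R(1) \<beta>R R(4) \<beta>(2) v] by blast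
    have "u1 \<in> add d a" using u1 add_comm R by blast
    then obtain u2 where u2: "u2 \<in> add c a" "u1 \<in> add u2 \<delta>" using shift[OF R(3) \<delta>R R(1) \<delta>(2)] by blast
    have u1R: "u1 \<in> R" using u1 add_sub R by blast
    have u2R: "u2 \<in> R" using u2 add_sub R by blast
    have e1: "setadd add {v} I = setadd add {u1} I" using coset_eq u1R \<beta> u1 by blast
    have e2: "setadd add {u1} I = setadd add {u2} I" using coset_eq u2R \<delta> u2 by blast
    have "u2 \<in> add a c" using u2 add_comm R by blast
    hence e3: "setadd add {u2} I = setadd add {u} I" using key[OF g R(1) R(3) u] by blast
    have "u \<in> R" "v \<in> R" using u v add_sub R by blast+
    then show "(u, v) \<in> rho_of R add I" unfolding rho_of_def using e1 e2 e3 by auto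
  }
  have m1: "mul d b \<in> add (mul d a) (mul d \<beta>)" using distrib R \<beta>R \<beta> by blast
  have m2: "mul a d \<in> add (mul a c) (mul a \<delta>)" using distrib R \<delta>R \<delta> by blast
  have f1: "setadd add {mul d b} I = setadd add {mul d a} I"
    using coset_eq[OF mul_in[OF R(4) R(1)] hi_mul[OF R(4) \<beta>(1)] m1] .
  have f2: "setadd add {mul a d} I = setadd add {mul a c} I"
    using coset_eq[OF mul_in[OF R(1) R(3)] hi_mul[OF R(1) \<delta>(1)] m2] .
  have "mul b d = mul d b" "mul d a = mul a d" using mul_comm R by blast+
  then show "(mul a c, mul b d) \<in> rho_of R add I" unfolding rho_of_def using f1 f2 mul_in R by auto
qed

end

lemma rho_mono: "hyperideal R add mul zero I \<Longrightarrow> hyperideal R add mul zero J \<Longrightarrow> I \<subseteq> J \<Longrightarrow>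
   rho_of R add I \<subseteq> rho_of R add J"
proof
  fix p assume hI: "hyperideal R add mul zero I" and hJ: "hyperideal R add mul zero J" and IJ: "I \<subseteq> J"
    and p: "p \<in> rho_of R add I"
  obtain x y where xy: "p = (x, y)" by (cases p)
  have "x \<in> R \<and> y \<in> R \<and> y \<in> setadd add {x} I" using rho_of_iff[OF hI] p xy by blast
  moreover have "setadd add {x} I \<subseteq> setadd add {x} J" using IJ by (auto simp: setadd_sl)
  ultimately show "p \<in> rho_of R add J" using rho_of_iff[OF hJ] xy by blast
qed

context
  fixes \<rho>
  assumes sr: "strongly_regular R add mul \<rho>"
begin

lemma sr_in: "(a, b) \<in> \<rho> \<Longrightarrow> a \<in> R \<and> b \<in> R" using sr unfolding strongly_regular_def equiv_def refl_on_def by blast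
lemma sr_refl: "a \<in> R \<Longrightarrow> (a, a) \<in> \<rho>" using sr unfolding strongly_regular_def equiv_def refl_on_def by blast
lemma sr_sym: "(a, b) \<in> \<rho> \<Longrightarrow> (b, a) \<in> \<rho>" using sr unfolding strongly_regular_def equiv_def sym_def by blast
lemma sr_trans: "(a, b) \<in> \<rho> \<Longrightarrow> (b, c) \<in> \<rho> \<Longrightarrow> (a, c) \<in> \<rho>" using sr unfolding strongly_regular_def equiv_def trans_def by blast
lemma sr_add: "(a, b) \<in> \<rho> \<Longrightarrow> (c, d) \<in> \<rho> \<Longrightarrow> u \<in> add a c \<Longrightarrow> v \<in> add b d \<Longrightarrow> (u, v) \<in> \<rho>"
  using sr unfolding strongly_regular_def by blast
lemma sr_mul: "(a, b) \<in> \<rho> \<Longrightarrow> (c, d) \<in> \<rho> \<Longrightarrow> (mul a c, mul b d) \<in> \<rho>"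
  using sr unfolding strongly_regular_def by blast

lemma hprods_R: "p \<in> hprods R mul \<Longrightarrow> p \<in> R"
  by (induction rule: hprods.induct) (auto simp: mul_in)

lemma hsums_rel: "U \<in> hsums R add mul \<Longrightarrow> \<forall>u\<in>U. \<forall>v\<in>U. (u, v) \<in> \<rho>"
  apply (induction rule: hsums.induct)
   apply (simp add: hprods_R sr_refl)
  apply (simp add: setadd_sr)
  using hprods_R sr_refl sr_add by blast

lemma gamma_sub: "gamma_star R add mul \<subseteq> \<rho>"
proof -
  have b: "{(x, y). \<exists>U\<in>hsums R add mul. x \<in> U \<and> y \<in> U} \<subseteq> \<rho>" using hsums_rel by blast
  have t: "trans \<rho>" using sr unfolding strongly_regular_def equiv_def by blast
  show ?thesis unfolding gamma_star_def
  proof (rule subsetI)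
    fix p assume "p \<in> {(x, y). \<exists>U\<in>hsums R add mul. x \<in> U \<and> y \<in> U}\<^sup>+"
    then have "p \<in> \<rho>\<^sup>+" using trancl_mono b by blast
    then show "p \<in> \<rho>" using trancl_id[OF t] by simp
  qed
qed

lemma f_hi: "hyperideal R add mul zero (\<rho> `` {zero})"
  unfolding hyperideal_def
proof (intro conjI ballI)
  show "\<rho> `` {zero} \<noteq> {}" using sr_refl zero_in by blast
  show "\<rho> `` {zero} \<subseteq> R" using sr_in by blast
next
  fix a b assume a: "a \<in> \<rho> `` {zero}" and b: "b \<in> \<rho> `` {zero}"
  have za: "(zero, a) \<in> \<rho>" and zb: "(zero, b) \<in> \<rho>" using a b by auto
  have bR: "b \<in> R" using zb sr_in by blast
  have nb: "(neg b, neg b) \<in> \<rho>" using sr_refl neg_in bR by blast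
  show "add a (neg b) \<subseteq> \<rho> `` {zero}"
  proof
    fix u assume u: "u \<in> add a (neg b)"
    have "(u, neg b) \<in> \<rho>" using sr_add[OF sr_sym[OF za] nb u] add_zl neg_in bR by blast
    moreover have "(zero, neg b) \<in> \<rho>" using sr_add[OF sr_sym[OF zb] nb] neg_prop bR add_zl neg_in by blast
    ultimately show "u \<in> \<rho> `` {zero}" using sr_trans sr_sym by blast
  qed
next
  fix r a assume r: "r \<in> R" and a: "a \<in> \<rho> `` {zero}"
  have "(mul r zero, mul r a) \<in> \<rho>" using sr_mul[OF sr_refl[OF r]] a by blast
  then show "mul r a \<in> \<rho> `` {zero}" using mul_zr r by simp
qed

lemma f_II: "gamma_star R add mul `` {zero} \<subseteq> \<rho> `` {zero}"
  using gamma_sub by blast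

lemma gf: "rho_of R add (\<rho> `` {zero}) = \<rho>"
proof (intro set_eqI iffI; clarify)
  fix x y assume "(x, y) \<in> rho_of R add (\<rho> `` {zero})"
  then have x: "x \<in> R" and "y \<in> setadd add {x} (\<rho> `` {zero})" using rho_of_iff[OF f_hi] by auto
  then obtain b where b: "(zero, b) \<in> \<rho>" "y \<in> add x b" by (auto simp: setadd_sl)
  then show "(x, y) \<in> \<rho>" using sr_add[OF sr_refl[OF x] b(1)] add_zr x by blast
next
  fix x y assume xy: "(x, y) \<in> \<rho>"
  then have x: "x \<in> R" and y: "y \<in> R" using sr_in by auto
  obtain b where b: "b \<in> add (neg x) y" using add_ne neg_in x y by blast
  have "y \<in> add (neg (neg x)) b" using rev1[OF neg_in[OF x] y _ b] add_sub neg_in x y b by blast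
  hence yb: "y \<in> add x b" using neg_neg x by simp
  have "zero \<in> add (neg x) x" using neg_prop add_comm neg_in x by metis
  hence "(zero, b) \<in> \<rho>" using sr_add[OF sr_refl[OF neg_in[OF x]] xy _ b] by blast
  then have "y \<in> setadd add {x} (\<rho> `` {zero})" using yb by (auto simp: setadd_sl)
  then show "(x, y) \<in> rho_of R add (\<rho> `` {zero})" using rho_of_iff[OF f_hi] x y by auto
qed

end

lemma top_sr: "strongly_regular R add mul (R \<times> R)"
  unfolding strongly_regular_def
proof (intro conjI allI impI ballI)
  show "equiv R (R \<times> R)" by (rule equivI) (auto simp: refl_on_def sym_def trans_def)
next
  fix a b c d u v assume "(a, b) \<in> R \<times> R" "(c, d) \<in> R \<times> R" "u \<in> add a c" "v \<in> add b d"
  then show "(u, v) \<in> R \<times> R" using add_sub by blast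
next
  fix a b c d assume "(a, b) \<in> R \<times> R" "(c, d) \<in> R \<times> R"
  then show "(mul a c, mul b d) \<in> R \<times> R" using mul_in by blast
qed

lemma sr_Inter: assumes ne: "A \<noteq> {}" and all: "\<forall>\<rho>\<in>A. strongly_regular R add mul \<rho>"
  shows "strongly_regular R add mul (\<Inter>A)"
  unfolding strongly_regular_def
proof (intro conjI allI impI ballI)
  obtain \<rho>0 where r0: "\<rho>0 \<in> A" using ne by blast
  show "equiv R (\<Inter>A)"
  proof (rule equivI)
    show "\<Inter>A \<subseteq> R \<times> R"
    proof
      fix p assume "p \<in> \<Inter>A"
      hence "p \<in> \<rho>0" using r0 by blast
      moreover obtain x y where "p = (x, y)" by (cases p)
      ultimately show "p \<in> R \<times> R" using sr_in[of \<rho>0 x y] all r0 by simp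
    qed
    show "refl_on R (\<Inter>A)" unfolding refl_on_def using sr_refl all by blast
    show "sym (\<Inter>A)" unfolding sym_def using sr_sym all by blast
    show "trans (\<Inter>A)" unfolding trans_def
    proof (intro allI impI)
      fix x y z assume "(x, y) \<in> \<Inter>A" "(y, z) \<in> \<Inter>A"
      then show "(x, z) \<in> \<Inter>A" using sr_trans all by blast
    qed
  qed
next
  fix a b c d u v assume "(a, b) \<in> \<Inter>A" "(c, d) \<in> \<Inter>A" "u \<in> add a c" "v \<in> add b d"
  then show "(u, v) \<in> \<Inter>A" using sr_add all by blast
next
  fix a b c d assume "(a, b) \<in> \<Inter>A" "(c, d) \<in> \<Inter>A"
  then show "(mul a c, mul b d) \<in> \<Inter>A" using sr_mul all by blast
qed

end

lemma hi_Inter: "hyperring R add mul zero one \<Longrightarrow> A \<noteq> {} \<Longrightarrow> \<forall>I\<in>A. hyperideal R add mul zero I \<Longrightarrow>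
  hyperideal R add mul zero (\<Inter>A)"
proof -
  assume hr: "hyperring R add mul zero one" and A: "A \<noteq> {}" "\<forall>I\<in>A. hyperideal R add mul zero I"
  have z: "zero \<in> \<Inter>A" using hi_zero[OF hr] A by blast
  have s: "\<Inter>A \<subseteq> R" using hi_sub[OF hr] A by blast
  show ?thesis unfolding hyperideal_def
  proof (intro conjI ballI)
    show "\<Inter>A \<noteq> {}" using z by blast
    show "\<Inter>A \<subseteq> R" using s .
  next
    fix a b assume "a \<in> \<Inter>A" "b \<in> \<Inter>A"
    then show "add a (hneg R add zero b) \<subseteq> \<Inter>A" using hi_closed[OF hr] A by blast
  next
    fix r a assume "r \<in> R" "a \<in> \<Inter>A"
    then show "mul r a \<in> \<Inter>A" using hi_mul[OF hr] A by blast
  qed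
qed

theorem mainTheorem17:
  fixes R :: "'a set" and add :: "'a \<Rightarrow> 'a \<Rightarrow> 'a set" and mul :: "'a \<Rightarrow> 'a \<Rightarrow> 'a"
    and zero one :: 'a
  assumes hr: "hyperring R add mul zero one"
  defines "SR \<equiv> {\<rho>. strongly_regular R add mul \<rho>}"
      and "II \<equiv> {I. hyperideal R add mul zero I \<and> gamma_star R add mul `` {zero} \<subseteq> I}"
      and "f \<equiv> (\<lambda>\<rho>. \<rho> `` {zero})"
      and "g \<equiv> (\<lambda>I. rho_of R add I)"
  shows "(\<forall>\<rho>\<in>SR. f \<rho> \<in> II) \<and>
         (\<forall>I\<in>II. g I \<in> SR \<and> f (g I) = I) \<and>
         (\<forall>\<rho>\<in>SR. g (f \<rho>) = \<rho>) \<and>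
         bij_betw f SR II \<and>
         (\<forall>\<rho>\<in>SR. \<forall>\<sigma>\<in>SR. \<rho> \<subseteq> \<sigma> \<longleftrightarrow> f \<rho> \<subseteq> f \<sigma>) \<and>
         complete_incl_lattice SR \<and> complete_incl_lattice II"
proof -
  have L1: "\<forall>\<rho>\<in>SR. f \<rho> \<in> II" using f_hi[OF hr] f_II[OF hr] unfolding SR_def II_def f_def by blast
  have L2: "\<forall>I\<in>II. g I \<in> SR \<and> f (g I) = I"
    using rho_of_sr[OF hr] rho_of_zero[OF hr] unfolding SR_def II_def f_def g_def by blast
  have L3: "\<forall>\<rho>\<in>SR. g (f \<rho>) = \<rho>" using gf[OF hr] unfolding SR_def f_def g_def by blast
  have L4: "bij_betw f SR II"
    by (rule bij_betw_byWitness[where f'=g]) (use L1 L2 L3 in auto)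
  have L5: "\<forall>\<rho>\<in>SR. \<forall>\<sigma>\<in>SR. \<rho> \<subseteq> \<sigma> \<longleftrightarrow> f \<rho> \<subseteq> f \<sigma>"
  proof (intro ballI)
    fix \<rho> \<sigma> assume r: "\<rho> \<in> SR" and s: "\<sigma> \<in> SR"
    show "\<rho> \<subseteq> \<sigma> \<longleftrightarrow> f \<rho> \<subseteq> f \<sigma>"
    proof
      assume "\<rho> \<subseteq> \<sigma>" thus "f \<rho> \<subseteq> f \<sigma>" unfolding f_def by blast
    next
      assume h: "f \<rho> \<subseteq> f \<sigma>"
      have "f \<rho> \<in> II" "f \<sigma> \<in> II" using L1 r s by blast+
      hence "g (f \<rho>) \<subseteq> g (f \<sigma>)" using rho_mono[OF hr] h unfolding g_def II_def by blast
      thus "\<rho> \<subseteq> \<sigma>" using L3 r s by simp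
    qed
  qed
  have L6: "complete_incl_lattice SR"
  proof (rule cil_intro[where T="R \<times> R"])
    show "R \<times> R \<in> SR" using top_sr[OF hr] unfolding SR_def by blast
  next
    fix s assume "s \<in> SR" hence srs: "strongly_regular R add mul s" unfolding SR_def by blast
    show "s \<subseteq> R \<times> R" using sr_in[OF hr srs] by auto
  next
    fix A assume "A \<subseteq> SR" "A \<noteq> {}"
    thus "\<Inter>A \<in> SR" using sr_Inter[OF hr] unfolding SR_def by blast
  qed
  have RR: "f (R \<times> R) = R" unfolding f_def using zero_in[OF hr] by blast
  have L7: "complete_incl_lattice II"
  proof (rule cil_intro[where T="R"])
    show "R \<in> II" using L1 top_sr[OF hr] RR unfolding SR_def by force
  next
    fix s assume "s \<in> II" thus "s \<subseteq> R" using hi_sub[OF hr] unfolding II_def by blast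
  next
    fix A assume A: "A \<subseteq> II" "A \<noteq> {}"
    have "hyperideal R add mul zero (\<Inter>A)" using hi_Inter[OF hr A(2)] A(1) unfolding II_def by blast
    moreover have "gamma_star R add mul `` {zero} \<subseteq> \<Inter>A" using A unfolding II_def by blast
    ultimately show "\<Inter>A \<in> II" unfolding II_def by blast
  qed
  show ?thesis using L1 L2 L3 L4 L5 L6 L7 by blast
qed

end
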